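(* Let $(X,\tau)$ be a $\mathbb{B}$-topological space. (i) If $(X,\tau)$ is $T_1$, then the topological space $(X,\tau[tt]\vee\tau[ff])$ is $T_1$. (ii) If both topological spaces $(X,\tau[tt])$ and $(X,\tau[ff])$ are $T_1$, then $(X,\tau)$ is $T_1$.
   Context: $\mathbb{B}=\{0,1,tt,ff\}$ is the four-element Boolean algebra with bottom $0$, top $1$, and $tt,ff$ incomparable complements; $a\to b=\neg a\vee b$. A $\mathbb{B}$-topology on $X$ is $\tau\subseteq\mathbb{B}^X$ containing all constant maps and closed under arbitrary pointwise joins and finite pointwise meets; $\tau[b]=\{\lambda[b]:\lambda\in\tau\}$ with $\lambda[b]=\{x:\lambda(x)\ge b\}$; $\tau[tt]\vee\tau[ff]$ is the topology generated by $\tau[tt]\cup\tau[ff]$. Specialization $\mathbb{B}$-order: $\Omega(\tau)(x,y)=\bigwedge_{\lambda\in\tau}(\lambda(x)\to\lambda(y))$. $(X,\tau)$ is $R_0$ if $\Omega(\tau)$ is symmetric, $T_0$ if $\Omega(\tau)(x,y)=1=\Omega(\tau)(y,x)$ implies $x=y$, and $T_1$ if it is both $T_0$ and $R_0$. *)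

theory Defs
  imports "HOL-Analysis.Analysis" "HOL-Library.Product_Order"
begin

text \<open>The four-element Boolean algebra B = {0,1,tt,ff}, realised as bool \<times> bool
  with the componentwise order: 0 = bot, 1 = top, tt and ff incomparable complements.\<close>
type_synonym B4 = "bool \<times> bool"

definition tt :: B4 where "tt = (True, False)"
definition ff :: B4 where "ff = (False, True)"

definition bimp :: "B4 \<Rightarrow> B4 \<Rightarrow> B4" where "bimp a b = sup (- a) b"

definition is_Btopology :: "('a \<Rightarrow> B4) set \<Rightarrow> bool" where
  "is_Btopology \<tau> \<longleftrightarrow>
     (\<forall>c. (\<lambda>x. c) \<in> \<tau>) \<and>
     (\<forall>S. S \<subseteq> \<tau> \<longrightarrow> Sup S \<in> \<tau>) \<and>
     (\<forall>l\<in>\<tau>. \<forall>m\<in>\<tau>. inf l m \<in> \<tau>)"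

definition Bcut :: "('a \<Rightarrow> B4) \<Rightarrow> B4 \<Rightarrow> 'a set" where
  "Bcut l b = {x. b \<le> l x}"

definition cut_top :: "('a \<Rightarrow> B4) set \<Rightarrow> B4 \<Rightarrow> 'a topology" where
  "cut_top \<tau> b = topology_generated_by {Bcut l b | l. l \<in> \<tau>}"

definition join_top :: "('a \<Rightarrow> B4) set \<Rightarrow> 'a topology" where
  "join_top \<tau> = topology_generated_by ({Bcut l tt | l. l \<in> \<tau>} \<union> {Bcut l ff | l. l \<in> \<tau>})"

definition spec_order :: "('a \<Rightarrow> B4) set \<Rightarrow> 'a \<Rightarrow> 'a \<Rightarrow> B4" where
  "spec_order \<tau> x y = (INF l\<in>\<tau>. bimp (l x) (l y))"

definition B_R0 :: "('a \<Rightarrow> B4) set \<Rightarrow> bool" where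
  "B_R0 \<tau> \<longleftrightarrow> (\<forall>x y. spec_order \<tau> x y = spec_order \<tau> y x)"

definition B_T0 :: "('a \<Rightarrow> B4) set \<Rightarrow> bool" where
  "B_T0 \<tau> \<longleftrightarrow> (\<forall>x y. spec_order \<tau> x y = top \<and> spec_order \<tau> y x = top \<longrightarrow> x = y)"

definition B_T1 :: "('a \<Rightarrow> B4) set \<Rightarrow> bool" where
  "B_T1 \<tau> \<longleftrightarrow> B_T0 \<tau> \<and> B_R0 \<tau>"

end

theory Submission
  imports Defs
begin

lemma gen_sep:
  assumes "generate_topology_on S U"
  shows "x \<in> U \<Longrightarrow> y \<notin> U \<Longrightarrow> \<exists>V\<in>S. x \<in> V \<and> y \<notin> V"
  using assms by (induction rule: generate_topology_on.induct) blast+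

lemma gen_t1_iff:
  "t1_space (topology_generated_by S) \<longleftrightarrow>
   (\<forall>x\<in>\<Union>S. \<forall>y\<in>\<Union>S. x \<noteq> y \<longrightarrow> (\<exists>V\<in>S. x \<in> V \<and> y \<notin> V))"
  unfolding t1_space_def topology_generated_by_topspace
  by (meson gen_sep openin_topology_generated_by_iff topology_generated_by_Basis)

lemma Bcut_tt: "Bcut l tt = {x. fst (l x)}"
  by (auto simp: Bcut_def tt_def less_eq_prod_def)
lemma Bcut_ff: "Bcut l ff = {x. snd (l x)}"
  by (auto simp: Bcut_def ff_def less_eq_prod_def)

lemma spec_fst: "fst (spec_order \<tau> x y) = (\<forall>l\<in>\<tau>. fst (l x) \<longrightarrow> fst (l y))"
  unfolding spec_order_def bimp_def
  by (auto simp: fst_Inf image_image uminus_prod_def sup_prod_def)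
lemma spec_snd: "snd (spec_order \<tau> x y) = (\<forall>l\<in>\<tau>. snd (l x) \<longrightarrow> snd (l y))"
  unfolding spec_order_def bimp_def
  by (auto simp: snd_Inf image_image uminus_prod_def sup_prod_def)

lemma spec_eq: "spec_order \<tau> x y = spec_order \<tau> y x \<longleftrightarrow>
   (fst (spec_order \<tau> x y) = fst (spec_order \<tau> y x) \<and> snd (spec_order \<tau> x y) = snd (spec_order \<tau> y x))"
  by (simp add: prod_eq_iff)

lemma spec_top: "spec_order \<tau> x y = top \<longleftrightarrow>
   (fst (spec_order \<tau> x y) \<and> snd (spec_order \<tau> x y))"
  by (simp add: prod_eq_iff top_prod_def)

theorem mainTheorem14:
  fixes \<tau> :: "('a \<Rightarrow> B4) set"
  assumes "is_Btopology \<tau>"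
  shows "(B_T1 \<tau> \<longrightarrow> t1_space (join_top \<tau>))
     \<and> (t1_space (cut_top \<tau> tt) \<and> t1_space (cut_top \<tau> ff) \<longrightarrow> B_T1 \<tau>)"
proof -
  have c: "(\<lambda>x. top) \<in> \<tau>" using assms unfolding is_Btopology_def by blast
  have m1: "Bcut (\<lambda>x. top) tt \<in> {Bcut l tt | l. l \<in> \<tau>}" using c by blast
  have m2: "Bcut (\<lambda>x. top) ff \<in> {Bcut l ff | l. l \<in> \<tau>}" using c by blast
  have U1: "\<Union>{Bcut l tt | l. l \<in> \<tau>} = UNIV"
  proof (rule set_eqI, rule iffI)
    fix x :: 'a assume "x \<in> UNIV"
    have "x \<in> Bcut (\<lambda>x. top) tt" by (simp add: Bcut_tt top_prod_def)
    with m1 show "x \<in> \<Union>{Bcut l tt | l. l \<in> \<tau>}" by (rule UnionI)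
  qed simp
  have U2: "\<Union>{Bcut l ff | l. l \<in> \<tau>} = UNIV"
  proof (rule set_eqI, rule iffI)
    fix x :: 'a assume "x \<in> UNIV"
    have "x \<in> Bcut (\<lambda>x. top) ff" by (simp add: Bcut_ff top_prod_def)
    with m2 show "x \<in> \<Union>{Bcut l ff | l. l \<in> \<tau>}" by (rule UnionI)
  qed simp
  have A: "B_T1 \<tau> \<longrightarrow> t1_space (join_top \<tau>)"
  proof
    assume T: "B_T1 \<tau>"
    show "t1_space (join_top \<tau>)"
      unfolding join_top_def gen_t1_iff
    proof (intro ballI impI)
      fix x y :: 'a assume "x \<noteq> y"
      show "\<exists>V\<in>{Bcut l tt |l. l \<in> \<tau>} \<union> {Bcut l ff |l. l \<in> \<tau>}. x \<in> V \<and> y \<notin> V"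
      proof (rule ccontr)
        assume H: "\<not> ?thesis"
        have a1: "fst (spec_order \<tau> x y)" unfolding spec_fst
        proof (intro ballI impI)
          fix l assume "l \<in> \<tau>" "fst (l x)"
          then have "Bcut l tt \<in> {Bcut l tt |l. l \<in> \<tau>} \<union> {Bcut l ff |l. l \<in> \<tau>}" "x \<in> Bcut l tt"
            by (auto simp: Bcut_tt)
          with H show "fst (l y)" by (auto simp: Bcut_tt)
        qed
        have a2: "snd (spec_order \<tau> x y)" unfolding spec_snd
        proof (intro ballI impI)
          fix l assume "l \<in> \<tau>" "snd (l x)"
          then have "Bcut l ff \<in> {Bcut l tt |l. l \<in> \<tau>} \<union> {Bcut l ff |l. l \<in> \<tau>}" "x \<in> Bcut l ff"
            by (auto simp: Bcut_ff)
          with H show "snd (l y)" by (auto simp: Bcut_ff)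
        qed
        have xy: "spec_order \<tau> x y = top" using a1 a2 by (simp add: spec_top)
        have "spec_order \<tau> y x = spec_order \<tau> x y" using T unfolding B_T1_def B_R0_def by simp
        with xy have "spec_order \<tau> y x = top" by simp
        with xy T have "x = y" unfolding B_T1_def B_T0_def by blast
        with \<open>x \<noteq> y\<close> show False by simp
      qed
    qed
  qed
  have B: "t1_space (cut_top \<tau> tt) \<and> t1_space (cut_top \<tau> ff) \<longrightarrow> B_T1 \<tau>"
  proof
    assume H: "t1_space (cut_top \<tau> tt) \<and> t1_space (cut_top \<tau> ff)"
    have t: "\<not> fst (spec_order \<tau> x y)" if "x \<noteq> y" for x y
    proof -
      from H that obtain V where "V \<in> {Bcut l tt | l. l \<in> \<tau>}" "x \<in> V" "y \<notin> V"
        unfolding cut_top_def gen_t1_iff U1 by blast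
      then show ?thesis by (auto simp: spec_fst Bcut_tt)
    qed
    have s: "\<not> snd (spec_order \<tau> x y)" if "x \<noteq> y" for x y
    proof -
      from H that obtain V where "V \<in> {Bcut l ff | l. l \<in> \<tau>}" "x \<in> V" "y \<notin> V"
        unfolding cut_top_def gen_t1_iff U2 by blast
      then show ?thesis by (auto simp: spec_snd Bcut_ff)
    qed
    have R: "spec_order \<tau> x y = spec_order \<tau> y x" for x y
    proof (cases "x = y")
      case False
      then show ?thesis using t[of x y] t[of y x] s[of x y] s[of y x] by (simp add: prod_eq_iff)
    qed simp
    have T0: "x = y" if "spec_order \<tau> x y = top" for x y
      using that t[of x y] by (auto simp: spec_top)
    show "B_T1 \<tau>" unfolding B_T1_def B_R0_def B_T0_def using R T0 by blast
  qed
  from A B show ?thesis by blast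
qed

end
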